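(* Let $\Omega$ be a zigzag continual diagram, let $\epsilon>0$, let $f(x)=x+b$ with $b>0$, let $z_+$ be the maximal real number with $f(z_+)=\Omega(z_+-\epsilon)+\epsilon$, and let $\overline{\Omega}=\overline{\Omega}_{\Omega,\epsilon,f}$ be the $\epsilon$-shift of $\Omega$ along $f$. Then for every non-negative function $\phi\colon\mathbb{R}\to\mathbb{R}_+$, \[\int_{-\infty}^{\infty}\phi(z)\,d\mu_{\overline{\Omega}}(z)\ \ge\ \int_{-\infty}^{\infty}\phi(z+\epsilon)\,P^{\min}_{z_+}(z+\epsilon)\,d\mu_\Omega(z).\]
   Context: A continual diagram is a function $\omega\colon\mathbb{R}\to\mathbb{R}_+$ such that $|\omega(z_1)-\omega(z_2)|\le|z_1-z_2|$ for all $z_1,z_2$, and $\omega(z)=|z|$ for all sufficiently large $|z|$. It is a zigzag if it is piecewise affine with slopes only $\pm1$; then, with its local minima at $\mathbbm{x}_0<\dots<\mathbbm{x}_L$ and local maxima at $\mathbbm{y}_1<\dots<\mathbbm{y}_L$, its Cauchy transform is $\mathbf{G}_\omega(z)=\prod_{i=1}^L(z-\mathbbm{y}_i)/\prod_{i=0}^L(z-\mathbbm{x}_i)$, which decomposes as $\sum_i p_i/(z-\mathbbm{x}_i)$ with $p_i>0$, $\sum p_i=1$, and the transition measure is $\mu_\omega=\sum_i p_i\delta_{\mathbbm{x}_i}$. For a general continual diagram, $\log[z\,\mathbf{G}_\omega(z)]=-\int_{-\infty}^\infty\frac{1}{z-w}\big(\frac{\omega(w)-|w|}{2}\big)'\,dw$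 ($z\in\mathbb{C}\setminus\mathbb{R}$) and $\mu_\omega$ is the probability measure with $\mathbf{G}_\omega(z)=\int\frac{d\mu_\omega(x)}{z-x}$ (this agrees with the zigzag definition). $\epsilon$-shift: $\overline{\Omega}_{\Omega,\epsilon,f}(z)=\min\big[\max[\Omega(z-\epsilon)-\epsilon,\ f(z)],\ \Omega(z-\epsilon)+\epsilon\big]$. For real $z_+$ (and the fixed $\epsilon$): $P^{\min}_{z_+}(z)=\frac{z-z_+}{z+\epsilon-z_+}$ for $z\ge z_+$, and $P^{\min}_{z_+}(z)=0$ otherwise. *)

theory Defs
  imports "HOL-Probability.Probability"
begin

definition continual_diagram :: "(real \<Rightarrow> real) \<Rightarrow> bool" where
  "continual_diagram \<omega> \<longleftrightarrow>
     (\<forall>z. \<omega> z \<ge> 0) \<and>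
     (\<forall>z1 z2. \<bar>\<omega> z1 - \<omega> z2\<bar> \<le> \<bar>z1 - z2\<bar>) \<and>
     (\<exists>R. \<forall>z. \<bar>z\<bar> \<ge> R \<longrightarrow> \<omega> z = \<bar>z\<bar>)"

definition zigzag :: "(real \<Rightarrow> real) \<Rightarrow> bool" where
  "zigzag \<omega> \<longleftrightarrow> continual_diagram \<omega> \<and>
     (\<exists>S. finite S \<and>
        (\<forall>a b. a < b \<and> {a<..<b} \<inter> S = {} \<longrightarrow>
           (\<exists>s\<in>{-1, 1::real}. \<forall>x\<in>{a..b}. \<omega> x = \<omega> a + s * (x - a))))"

definition local_minima :: "(real \<Rightarrow> real) \<Rightarrow> real set" where
  "local_minima \<omega> = {x. \<exists>d>0. \<forall>y. \<bar>y - x\<bar> < d \<longrightarrow> \<omega> x \<le> \<omega> y}"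

definition local_maxima :: "(real \<Rightarrow> real) \<Rightarrow> real set" where
  "local_maxima \<omega> = {x. \<exists>d>0. \<forall>y. \<bar>y - x\<bar> < d \<longrightarrow> \<omega> y \<le> \<omega> x}"

text \<open>Weight p_i of the minimum x_i in the partial fraction decomposition of
  G(z) = prod (z - y_j) / prod (z - x_i), i.e. the residue at x_i.\<close>
definition zigzag_weight :: "(real \<Rightarrow> real) \<Rightarrow> real \<Rightarrow> real" where
  "zigzag_weight \<omega> x =
     (if x \<in> local_minima \<omega> then
        (\<Prod>y\<in>local_maxima \<omega>. (x - y)) / (\<Prod>x'\<in>local_minima \<omega> - {x}. (x - x'))
      else 0)"

definition transition_measure :: "(real \<Rightarrow> real) \<Rightarrow> real measure" where
  "transition_measure \<omega> = density (count_space UNIV) (\<lambda>x. ennreal (zigzag_weight \<omega> x))"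

definition eps_shift :: "(real \<Rightarrow> real) \<Rightarrow> real \<Rightarrow> (real \<Rightarrow> real) \<Rightarrow> real \<Rightarrow> real" where
  "eps_shift \<Omega> \<epsilon> f z = min (max (\<Omega> (z - \<epsilon>) - \<epsilon>) (f z)) (\<Omega> (z - \<epsilon>) + \<epsilon>)"

definition P_min :: "real \<Rightarrow> real \<Rightarrow> real \<Rightarrow> real" where
  "P_min \<epsilon> zp z = (if z \<ge> zp then (z - zp) / (z + \<epsilon> - zp) else 0)"

end

theory Submission
  imports Defs
begin


definition pw :: "(real \<Rightarrow> real) \<Rightarrow> real set \<Rightarrow> bool" where
  "pw g T \<longleftrightarrow> finite T \<and> (\<forall>p q. p < q \<and> {p<..<q} \<inter> T = {} \<longrightarrow>
     (\<exists>s\<in>{-1,1::real}. \<forall>x\<in>{p..q}. g x = g p + s * (x - p)))"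

lemma pwD:
  assumes "pw g T" "p < q" "{p<..<q} \<inter> T = {}" and that: "t \<in> {p..q}"
  shows "\<exists>s\<in>{-1,1::real}. \<forall>x\<in>{p..q}. g x = g t + s * (x - t)"
proof -
  obtain s where s: "s\<in>{-1,1::real}" "\<forall>x\<in>{p..q}. g x = g p + s * (x - p)"
    using assms unfolding pw_def by blast
  have "g t = g p + s * (t - p)" using s that by blast
  have "\<forall>x\<in>{p..q}. g x = g t + s * (x - t)"
  proof
    fix x assume "x \<in> {p..q}"
    then have "g x = g p + s * (x - p)" using s(2) by blast
    with \<open>g t = g p + s * (t - p)\<close> show "g x = g t + s * (x - t)" by (simp add: algebra_simps)
  qed
  then show ?thesis using s(1) by blast
qed

lemma pw_finite: "pw g T \<Longrightarrow> finite T" by (simp add: pw_def)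

lemma slope_unique:
  fixes g :: "real \<Rightarrow> real"
  assumes "p < q" "\<forall>x\<in>{p..q}. g x = g t + s * (x - t)" "\<forall>x\<in>{p..q}. g x = g t' + s' * (x - t')"
  shows "s = s'"
proof -
  have m: "q \<in> {p..q}" "p \<in> {p..q}" using assms(1) by auto
  have "g q - g p = s * (q - p)" using assms(2)[rule_format, OF m(1)] assms(2)[rule_format, OF m(2)]
    by (simp add: algebra_simps)
  moreover have "g q - g p = s' * (q - p)" using assms(3)[rule_format, OF m(1)] assms(3)[rule_format, OF m(2)]
    by (simp add: algebra_simps)
  ultimately show ?thesis using assms(1) by auto
qed

lemma lin_sub: fixes g :: "real \<Rightarrow> real" shows "\<forall>x\<in>I. g x = g t + s * (x - t) \<Longrightarrow> J \<subseteq> I \<Longrightarrow> \<forall>x\<in>J. g x = g t + s * (x - t)"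
  by blast

lemma pw_local:
  assumes "pw g T"
  shows "\<exists>\<delta>>0. \<exists>s1\<in>{-1,1::real}. \<exists>s2\<in>{-1,1::real}.
     (\<forall>x\<in>{t-\<delta>..t}. g x = g t + s1 * (x - t)) \<and> (\<forall>x\<in>{t..t+\<delta>}. g x = g t + s2 * (x - t))
     \<and> (t \<notin> T \<longrightarrow> s1 = s2)"
proof -
  obtain \<delta> where d: "\<delta> > 0" "\<forall>x\<in>T. x \<noteq> t \<longrightarrow> \<delta> \<le> dist t x"
    using finite_set_avoid[OF pw_finite[OF assms]] by blast
  have L: "{t-\<delta><..<t} \<inter> T = {}" using d by (force simp: dist_real_def)
  have R: "{t<..<t+\<delta>} \<inter> T = {}" using d by (force simp: dist_real_def)
  obtain s1 where s1: "s1\<in>{-1,1::real}" "\<forall>x\<in>{t-\<delta>..t}. g x = g t + s1 * (x - t)"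
  proof -
    have "t - \<delta> < t" "t \<in> {t-\<delta>..t}" using d by auto
    from pwD[OF assms this(1) L this(2)] show ?thesis using that by blast
  qed
  obtain s2 where s2: "s2\<in>{-1,1::real}" "\<forall>x\<in>{t..t+\<delta>}. g x = g t + s2 * (x - t)"
  proof -
    have "t < t + \<delta>" "t \<in> {t..t+\<delta>}" using d by auto
    from pwD[OF assms this(1) R this(2)] show ?thesis using that by blast
  qed
  have "s1 = s2" if "t \<notin> T"
  proof -
    have B: "{t-\<delta><..<t+\<delta>} \<inter> T = {}" using d that by (force simp: dist_real_def)
    obtain s where s: "\<forall>x\<in>{t-\<delta>..t+\<delta>}. g x = g t + s * (x - t)"
    proof -
      have "t - \<delta> < t + \<delta>" "t \<in> {t-\<delta>..t+\<delta>}" using d by auto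
      from pwD[OF assms this(1) B this(2)] show ?thesis using that by blast
    qed
    have "s1 = s" by (rule slope_unique[OF _ s1(2) lin_sub[OF s]]) (use d in auto)
    moreover have "s2 = s" by (rule slope_unique[OF _ s2(2) lin_sub[OF s]]) (use d in auto)
    ultimately show ?thesis by simp
  qed
  then show ?thesis using d s1 s2 by blast
qed

lemma ext_char:
  assumes "\<delta> > 0" "s1\<in>{-1,1::real}" "s2\<in>{-1,1::real}"
    "\<forall>x\<in>{t-\<delta>..t}. g x = g t + s1 * (x - t)" "\<forall>x\<in>{t..t+\<delta>}. g x = g t + s2 * (x - t)"
  shows "(t \<in> local_minima g \<longleftrightarrow> s1 = -1 \<and> s2 = 1) \<and> (t \<in> local_maxima g \<longleftrightarrow> s1 = 1 \<and> s2 = -1)"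
proof -
  have l: "g x = g t + s1 * (x - t)" if "t - \<delta> \<le> x" "x \<le> t" for x by (rule assms(4)[rule_format]) (use that in auto)
  have r: "g x = g t + s2 * (x - t)" if "t \<le> x" "x \<le> t + \<delta>" for x by (rule assms(5)[rule_format]) (use that in auto)
  have m1: "t \<in> local_minima g" if "s1 = -1" "s2 = 1"
  proof -
    have "g t \<le> g y" if "\<bar>y - t\<bar> < \<delta>" for y
    proof (cases "y \<le> t")
      case True then show ?thesis using l[of y] that \<open>s1 = -1\<close> by auto
    next
      case False then show ?thesis using r[of y] that \<open>s2 = 1\<close> by auto
    qed
    then show ?thesis unfolding local_minima_def using assms(1) by blast
  qed
  have m2: "t \<in> local_maxima g" if "s1 = 1" "s2 = -1"
  proof -
    have "g y \<le> g t" if "\<bar>y - t\<bar> < \<delta>" for y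
    proof (cases "y \<le> t")
      case True then show ?thesis using l[of y] that \<open>s1 = 1\<close> by auto
    next
      case False then show ?thesis using r[of y] that \<open>s2 = -1\<close> by auto
    qed
    then show ?thesis unfolding local_maxima_def using assms(1) by blast
  qed
  have m3: "s1 = -1 \<and> s2 = 1" if "t \<in> local_minima g"
  proof -
    have "\<exists>d>0. \<forall>y. \<bar>y - t\<bar> < d \<longrightarrow> g t \<le> g y" using that by (simp add: local_minima_def)
    then obtain d where d: "d > 0" "\<forall>y. \<bar>y - t\<bar> < d \<longrightarrow> g t \<le> g y" by blast
    define e where "e = min d \<delta> / 2"
    have e: "e > 0" "e < d" "e \<le> \<delta>" using d assms(1) by (auto simp: e_def)
    have "s1 \<noteq> 1"
    proof
      assume "s1 = 1"
      then have "g (t - e) = g t - e" using l[of "t-e"] e by auto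
      moreover have "g t \<le> g (t - e)" using d e by auto
      ultimately show False using e by auto
    qed
    moreover have "s2 \<noteq> -1"
    proof
      assume "s2 = -1"
      then have "g (t + e) = g t - e" using r[of "t+e"] e by auto
      moreover have "g t \<le> g (t + e)" using d e by auto
      ultimately show False using e by auto
    qed
    ultimately show ?thesis using assms(2,3) by auto
  qed
  have m4: "s1 = 1 \<and> s2 = -1" if "t \<in> local_maxima g"
  proof -
    have "\<exists>d>0. \<forall>y. \<bar>y - t\<bar> < d \<longrightarrow> g y \<le> g t" using that by (simp add: local_maxima_def)
    then obtain d where d: "d > 0" "\<forall>y. \<bar>y - t\<bar> < d \<longrightarrow> g y \<le> g t" by blast
    define e where "e = min d \<delta> / 2"
    have e: "e > 0" "e < d" "e \<le> \<delta>" using d assms(1) by (auto simp: e_def)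
    have "s1 \<noteq> -1"
    proof
      assume "s1 = -1"
      then have "g (t - e) = g t + e" using l[of "t-e"] e by auto
      moreover have "g (t - e) \<le> g t" using d e by auto
      ultimately show False using e by auto
    qed
    moreover have "s2 \<noteq> 1"
    proof
      assume "s2 = 1"
      then have "g (t + e) = g t + e" using r[of "t+e"] e by auto
      moreover have "g (t + e) \<le> g t" using d e by auto
      ultimately show False using e by auto
    qed
    ultimately show ?thesis using assms(2,3) by auto
  qed
  show ?thesis using m1 m2 m3 m4 by blast
qed

lemma ext_subset:
  assumes "pw g T"
  shows "local_minima g \<subseteq> T" "local_maxima g \<subseteq> T"
proof -
  have *: "t \<notin> local_minima g \<and> t \<notin> local_maxima g" if "t \<notin> T" for t
  proof -
    obtain \<delta> s1 s2 where "\<delta>>0" "s1\<in>{-1,1::real}" "s2\<in>{-1,1::real}"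
     "(\<forall>x\<in>{t-\<delta>..t}. g x = g t + s1 * (x - t))" "(\<forall>x\<in>{t..t+\<delta>}. g x = g t + s2 * (x - t))"
     and eq: "(t \<notin> T \<longrightarrow> s1 = s2)"
      using pw_local[OF assms, of t] by metis
    have "\<not> (s1 = -1 \<and> s2 = 1)" "\<not> (s1 = 1 \<and> s2 = -1)" using that eq by auto
    then show ?thesis using ext_char[of \<delta> s1 s2 t g] \<open>\<delta>>0\<close> \<open>s1\<in>{-1,1}\<close> \<open>s2\<in>{-1,1}\<close>
      \<open>(\<forall>x\<in>{t-\<delta>..t}. g x = g t + s1 * (x - t))\<close> \<open>(\<forall>x\<in>{t..t+\<delta>}. g x = g t + s2 * (x - t))\<close> by blast
  qed
  show "local_minima g \<subseteq> T" "local_maxima g \<subseteq> T" using * by auto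
qed



lemma pw_neg: assumes "pw g T" shows "pw (\<lambda>x. - g x) T"
  unfolding pw_def
proof (intro conjI allI impI)
  show "finite T" using assms by (simp add: pw_def)
  fix p q :: real assume pq: "p < q \<and> {p<..<q} \<inter> T = {}"
  then obtain s where s: "s\<in>{-1,1::real}" "\<forall>x\<in>{p..q}. g x = g p + s * (x - p)"
    using assms unfolding pw_def by blast
  have "\<forall>x\<in>{p..q}. - g x = - g p + (-s) * (x - p)"
  proof
    fix x assume "x \<in> {p..q}"
    then have "g x = g p + s * (x - p)" using s(2) by blast
    then show "- g x = - g p + (-s) * (x - p)" by simp
  qed
  moreover have "-s \<in> {-1,1::real}" using s(1) by auto
  ultimately show "\<exists>s\<in>{- 1, 1}. \<forall>x\<in>{p..q}. - g x = - g p + s * (x - p)" by blast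
qed

lemma pw_add_const: assumes "pw g T" shows "pw (\<lambda>x. g x + c) T"
  unfolding pw_def
proof (intro conjI allI impI)
  show "finite T" using assms by (simp add: pw_def)
  fix p q :: real assume pq: "p < q \<and> {p<..<q} \<inter> T = {}"
  then obtain s where s: "s\<in>{-1,1::real}" "\<forall>x\<in>{p..q}. g x = g p + s * (x - p)"
    using assms unfolding pw_def by blast
  have "\<forall>x\<in>{p..q}. g x + c = (g p + c) + s * (x - p)"
  proof
    fix x assume "x \<in> {p..q}"
    then have "g x = g p + s * (x - p)" using s(2) by blast
    then show "g x + c = (g p + c) + s * (x - p)" by simp
  qed
  then show "\<exists>s\<in>{- 1, 1}. \<forall>x\<in>{p..q}. g x + c = (g p + c) + s * (x - p)" using s(1) by blast
qed

lemma pw_shift: assumes "pw g T" shows "pw (\<lambda>x. g (x - e)) ((\<lambda>x. x + e) ` T)"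
  unfolding pw_def
proof (intro conjI allI impI)
  show "finite ((\<lambda>x. x + e) ` T)" using assms by (simp add: pw_def)
  fix p q :: real assume pq: "p < q \<and> {p<..<q} \<inter> (\<lambda>x. x + e) ` T = {}"
  have "p - e < q - e" using pq by simp
  moreover have "{p-e<..<q-e} \<inter> T = {}"
  proof (rule ccontr)
    assume "{p-e<..<q-e} \<inter> T \<noteq> {}"
    then obtain t where t: "t \<in> T" "p - e < t" "t < q - e" by auto
    then have "t + e \<in> {p<..<q} \<inter> (\<lambda>x. x + e) ` T" by auto
    then show False using pq by blast
  qed
  ultimately have "p - e < q - e" "{p-e<..<q-e} \<inter> T = {}" by auto
  then obtain s where s: "s\<in>{-1,1::real}" "\<forall>x\<in>{p-e..q-e}. g x = g (p-e) + s * (x - (p-e))"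
    using assms unfolding pw_def by blast
  have "\<forall>x\<in>{p..q}. g (x - e) = g (p - e) + s * (x - p)"
  proof
    fix x assume "x \<in> {p..q}"
    then have "x - e \<in> {p-e..q-e}" by auto
    then have "g (x - e) = g (p-e) + s * ((x - e) - (p-e))" using s(2) by blast
    then show "g (x - e) = g (p - e) + s * (x - p)" by simp
  qed
  then show "\<exists>s\<in>{- 1, 1}. \<forall>x\<in>{p..q}. g (x - e) = g (p - e) + s * (x - p)" using s(1) by blast
qed

lemma pw_lin: "pw (\<lambda>x. x + b) {}"
  unfolding pw_def
proof (intro conjI allI impI)
  fix p q :: real
  have "\<forall>x\<in>{p..q}. x + b = (p + b) + 1 * (x - p)" by simp
  then show "\<exists>s\<in>{- 1, 1}. \<forall>x\<in>{p..q}. x + b = (p + b) + s * (x - p)" by blast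
qed simp

lemma pw_min:
  assumes f: "pw f T1" and g: "pw g T2"
  shows "\<exists>T. pw (\<lambda>x. min (f x) (g x)) T"
proof -
  define U where "U = T1 \<union> T2"
  have finU: "finite U" using f g by (simp add: pw_def U_def)
  have affU: "\<exists>s1\<in>{-1,1::real}. \<exists>s2\<in>{-1,1::real}. \<forall>x\<in>{p..q}. f x = f p + s1*(x-p) \<and> g x = g p + s2*(x-p)"
    if pq0: "p < q" and fr0: "{p<..<q} \<inter> U = {}" for p q
  proof -
    have h1: "{p<..<q} \<inter> T1 = {}" "{p<..<q} \<inter> T2 = {}" using fr0 by (auto simp: U_def)
    have pm: "p \<in> {p..q}" using pq0 by simp
    obtain s1 where s1: "s1\<in>{-1,1::real}" "\<forall>x\<in>{p..q}. f x = f p + s1 * (x - p)"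
      using pwD[OF f pq0 h1(1) pm] by blast
    obtain s2 where s2: "s2\<in>{-1,1::real}" "\<forall>x\<in>{p..q}. g x = g p + s2 * (x - p)"
      using pwD[OF g pq0 h1(2) pm] by blast
    show ?thesis using s1 s2 by blast
  qed
  define C where "C = {u. f u = g u \<and> \<not> (\<exists>\<delta>>0. \<forall>v. \<bar>v - u\<bar> < \<delta> \<longrightarrow> f v = g v)}"
  define h where "h u = (if \<exists>t\<in>U. u < t then Some (Min {t\<in>U. u < t}) else None)" for u
  have claim: "h u1 \<noteq> h u2" if u1: "u1 \<in> C - U" and u2: "u2 \<in> C - U" and lt: "u1 < u2" for u1 u2
  proof
    assume heq: "h u1 = h u2"
    have noU: "\<not> (u1 < t \<and> t < u2)" if "t \<in> U" for t
    proof
      assume t: "u1 < t \<and> t < u2"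
      then have ex1: "\<exists>t\<in>U. u1 < t" using that by blast
      define m1 where "m1 = Min {t\<in>U. u1 < t}"
      have hm1: "h u1 = Some m1" using ex1 by (simp add: h_def m1_def)
      have "m1 \<le> t" unfolding m1_def using finU that t by (intro Min_le) auto
      show False
      proof (cases "\<exists>t\<in>U. u2 < t")
        case True
        define m2 where "m2 = Min {t\<in>U. u2 < t}"
        have hm2: "h u2 = Some m2" using True by (simp add: h_def m2_def)
        have "m2 \<in> {t\<in>U. u2 < t}" unfolding m2_def using finU True by (intro Min_in) auto
        then show False using hm1 hm2 heq \<open>m1 \<le> t\<close> t by auto
      next
        case False
        then have "h u2 = None" by (simp add: h_def)
        then show False using hm1 heq by simp
      qed
    qed
    obtain \<delta> where d: "\<delta> > 0" "\<forall>t\<in>U. t \<noteq> u1 \<longrightarrow> \<delta> \<le> dist u1 t"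
      using finite_set_avoid[OF finU] by blast
    have free: "{u1-\<delta><..<u2} \<inter> U = {}"
    proof (rule ccontr)
      assume "{u1-\<delta><..<u2} \<inter> U \<noteq> {}"
      then obtain t where t: "t \<in> U" "u1 - \<delta> < t" "t < u2" by auto
      have "t \<noteq> u1" using t u1 by auto
      show False
      proof (cases "t < u1")
        case True
        then have "dist u1 t < \<delta>" using t by (simp add: dist_real_def)
        then show ?thesis using d t \<open>t \<noteq> u1\<close> by fastforce
      next
        case False
        then show ?thesis using noU[OF t(1)] t \<open>t \<noteq> u1\<close> by auto
      qed
    qed
    obtain s1 s2 where ss: "s1\<in>{-1,1::real}" "s2\<in>{-1,1::real}"
      "\<forall>x\<in>{u1-\<delta>..u2}. f x = f (u1-\<delta>) + s1*(x-(u1-\<delta>)) \<and> g x = g (u1-\<delta>) + s2*(x-(u1-\<delta>))"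
    proof -
      have "u1 - \<delta> < u2" using d lt by simp
      from affU[OF this free] show ?thesis using that by blast
    qed
    have m1: "u1 \<in> {u1-\<delta>..u2}" "u2 \<in> {u1-\<delta>..u2}" using d lt by auto
    have e1: "f u1 = g u1" "f u2 = g u2" using u1 u2 by (auto simp: C_def)
    have a1: "f u1 = f (u1-\<delta>) + s1*(u1-(u1-\<delta>))" "g u1 = g (u1-\<delta>) + s2*(u1-(u1-\<delta>))"
      using ss(3) m1(1) by blast+
    have a2: "f u2 = f (u1-\<delta>) + s1*(u2-(u1-\<delta>))" "g u2 = g (u1-\<delta>) + s2*(u2-(u1-\<delta>))"
      using ss(3) m1(2) by blast+
    have "(s1 - s2) * (u2 - u1) = 0" using e1 a1 a2 by (simp add: algebra_simps)
    then have s12: "s1 = s2" using lt by simp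
    then have fp: "f (u1-\<delta>) = g (u1-\<delta>)" using e1 a1 by simp
    have "\<exists>\<delta>>0. \<forall>v. \<bar>v - u1\<bar> < \<delta> \<longrightarrow> f v = g v"
    proof (intro exI[of _ "min \<delta> (u2 - u1)"] conjI allI impI)
      show "min \<delta> (u2 - u1) > 0" using d lt by simp
      fix v assume "\<bar>v - u1\<bar> < min \<delta> (u2 - u1)"
      then have "v \<in> {u1-\<delta>..u2}" by auto
      then have "f v = f (u1-\<delta>) + s1*(v-(u1-\<delta>)) \<and> g v = g (u1-\<delta>) + s2*(v-(u1-\<delta>))"
        using ss(3) by blast
      then show "f v = g v" using s12 fp by simp
    qed
    then show False using u1 by (auto simp: C_def)
  qed
  have inj: "inj_on h (C - U)"
  proof (rule inj_onI)
    fix u1 u2 assume "u1 \<in> C - U" "u2 \<in> C - U" "h u1 = h u2"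
    then show "u1 = u2" using claim[of u1 u2] claim[of u2 u1] by (cases u1 u2 rule: linorder_cases) auto
  qed
  have "h ` (C - U) \<subseteq> insert None (Some ` U)"
  proof
    fix z assume "z \<in> h ` (C - U)"
    then obtain u where z: "z = h u" by blast
    show "z \<in> insert None (Some ` U)"
    proof (cases "\<exists>t\<in>U. u < t")
      case True
      have "Min {t\<in>U. u < t} \<in> {t\<in>U. u < t}" using finU True by (intro Min_in) auto
      then show ?thesis using True z by (auto simp: h_def)
    next
      case False then show ?thesis using z by (simp add: h_def)
    qed
  qed
  then have "finite (h ` (C - U))" using finU by (meson finite_imageI finite_insert finite_subset)
  then have finCU: "finite (C - U)" using inj finite_imageD by blast
  have finT: "finite (U \<union> C)" using finCU finU
    by (metis Un_Diff_cancel finite_UnI)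
  have "pw (\<lambda>x. min (f x) (g x)) (U \<union> C)"
    unfolding pw_def
  proof (intro conjI allI impI)
    show "finite (U \<union> C)" by (fact finT)
    fix p q :: real assume pq: "p < q \<and> {p<..<q} \<inter> (U \<union> C) = {}"
    then have pq1: "p < q" "{p<..<q} \<inter> U = {}" "{p<..<q} \<inter> C = {}" by auto
    obtain s1 s2 where ss: "s1\<in>{-1,1::real}" "s2\<in>{-1,1::real}"
      "\<forall>x\<in>{p..q}. f x = f p + s1*(x-p) \<and> g x = g p + s2*(x-p)"
      using affU[OF pq1(1,2)] by blast
    have fx: "f x = f p + s1*(x-p)" "g x = g p + s2*(x-p)" if "x \<in> {p..q}" for x
      using ss(3) that by blast+
    show "\<exists>s\<in>{- 1, 1}. \<forall>x\<in>{p..q}. min (f x) (g x) = min (f p) (g p) + s * (x - p)"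
    proof (cases "s1 = s2")
      case True
      have "\<forall>x\<in>{p..q}. min (f x) (g x) = min (f p) (g p) + s1 * (x - p)"
      proof
        fix x assume "x \<in> {p..q}"
        then show "min (f x) (g x) = min (f p) (g p) + s1 * (x - p)"
          using fx[of x] True by (simp add: min_def)
      qed
      then show ?thesis using ss(1) by blast
    next
      case False
      define k where "k = s1 - s2"
      have k0: "k \<noteq> 0" using False by (simp add: k_def)
      define D where "D = f p - g p"
      have dif: "f x - g x = D + k * (x - p)" if "x \<in> {p..q}" for x
        using fx[OF that] by (simp add: D_def k_def algebra_simps)
      have sides: "(\<forall>x\<in>{p..q}. f x \<le> g x) \<or> (\<forall>x\<in>{p..q}. g x \<le> f x)"
      proof (rule ccontr)
        assume "\<not> ?thesis"
        then obtain x1 x2 where x1: "x1 \<in> {p..q}" "f x1 > g x1" and x2: "x2 \<in> {p..q}" "g x2 > f x2"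
          by (auto simp: not_le)
        define x0 where "x0 = p - D / k"
        have Dx0: "D = - k * (x0 - p)" using k0 by (simp add: x0_def field_simps)
        have "k * (x1 - x0) > 0" using dif[OF x1(1)] x1(2) Dx0 by (simp add: algebra_simps)
        moreover have "k * (x2 - x0) < 0" using dif[OF x2(1)] x2(2) Dx0 by (simp add: algebra_simps)
        ultimately have btw: "(x1 < x0 \<and> x0 < x2) \<or> (x2 < x0 \<and> x0 < x1)"
          by (auto simp: zero_less_mult_iff mult_less_0_iff)
        then have x0in: "x0 \<in> {p<..<q}" using x1(1) x2(1) by auto
        have fx0: "f x0 = g x0" using dif[of x0] x0in Dx0 by simp
        have "x0 \<in> C"
          unfolding C_def
        proof (intro CollectI conjI notI)
          show "f x0 = g x0" by (fact fx0)
          assume "\<exists>\<delta>>0. \<forall>v. \<bar>v - x0\<bar> < \<delta> \<longrightarrow> f v = g v"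
          then obtain \<delta> where d: "\<delta> > 0" "\<forall>v. \<bar>v - x0\<bar> < \<delta> \<longrightarrow> f v = g v" by blast
          define m where "m = min \<delta> (q - x0)"
          have mm: "0 < m" "m \<le> \<delta>" "m \<le> q - x0" using d(1) x0in by (auto simp: m_def)
          define v where "v = x0 + m / 2"
          have v: "\<bar>v - x0\<bar> < \<delta>" "v \<in> {p..q}" "v \<noteq> x0"
          proof -
            show "\<bar>v - x0\<bar> < \<delta>" unfolding v_def using mm by simp
            show "v \<in> {p..q}" unfolding v_def atLeastAtMost_iff using mm x0in by (intro conjI; simp; linarith)
            show "v \<noteq> x0" unfolding v_def using mm by simp
          qed
          have "f v - g v = k * (v - x0)" using dif[OF v(2)] Dx0 by (simp add: algebra_simps)
          moreover have "k * (v - x0) \<noteq> 0" using k0 v(3) by simp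
          ultimately show False using d v(1) by auto
        qed
        then show False using pq1(3) x0in by blast
      qed
      then show ?thesis
      proof
        assume le: "\<forall>x\<in>{p..q}. f x \<le> g x"
        have "\<forall>x\<in>{p..q}. min (f x) (g x) = min (f p) (g p) + s1 * (x - p)"
        proof
          fix x assume x: "x \<in> {p..q}"
          have "p \<in> {p..q}" using pq1 by auto
          then have "min (f p) (g p) = f p" using le by (simp add: min_def)
          moreover have "min (f x) (g x) = f x" using le x by (simp add: min_def)
          ultimately show "min (f x) (g x) = min (f p) (g p) + s1 * (x - p)" using fx(1)[OF x] by simp
        qed
        then show ?thesis using ss(1) by blast
      next
        assume le: "\<forall>x\<in>{p..q}. g x \<le> f x"
        have "\<forall>x\<in>{p..q}. min (f x) (g x) = min (f p) (g p) + s2 * (x - p)"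
        proof
          fix x assume x: "x \<in> {p..q}"
          have "p \<in> {p..q}" using pq1 by auto
          then have "g p \<le> f p" using le by blast
          then have "min (f p) (g p) = g p" by (simp add: min_def)
          moreover have "g x \<le> f x" using le x by blast
          then have "min (f x) (g x) = g x" by (simp add: min_def)
          ultimately show "min (f x) (g x) = min (f p) (g p) + s2 * (x - p)" using fx(2)[OF x] by simp
        qed
        then show ?thesis using ss(2) by blast
      qed
    qed
  qed
  then show ?thesis by blast
qed

lemma pw_max:
  assumes f: "pw f T1" and g: "pw g T2"
  shows "\<exists>T. pw (\<lambda>x. max (f x) (g x)) T"
proof -
  obtain T where "pw (\<lambda>x. min (- f x) (- g x)) T" using pw_min[OF pw_neg[OF f] pw_neg[OF g]] by blast
  then have "pw (\<lambda>x. - min (- f x) (- g x)) T" by (rule pw_neg)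
  moreover have "(\<lambda>x. - min (- f x) (- g x)) = (\<lambda>x. max (f x) (g x))" by (auto simp: min_def max_def)
  ultimately show ?thesis by auto
qed



lemma lin_reanchor:
  fixes g :: "real \<Rightarrow> real"
  assumes "\<forall>x\<in>I. g x = g t + s * (x - t)" "t' \<in> I"
  shows "\<forall>x\<in>I. g x = g t' + s * (x - t')"
proof
  fix x assume "x \<in> I"
  then have "g x = g t + s * (x - t)" using assms(1) by blast
  moreover have "g t' = g t + s * (t' - t)" using assms by blast
  ultimately show "g x = g t' + s * (x - t')" by (simp add: algebra_simps)
qed

definition LS :: "(real \<Rightarrow> real) \<Rightarrow> real \<Rightarrow> bool" where
  "LS g c \<longleftrightarrow> (\<exists>\<delta>>0. \<forall>x\<in>{c-\<delta>..c}. g x = g c + 1 * (x - c))"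

definition Jf :: "(real \<Rightarrow> real) \<Rightarrow> real \<Rightarrow> real \<Rightarrow> real \<Rightarrow> real" where
  "Jf g w a c = (g c + c) / (w - c) - (g a + a) / (w - a) - integral {a..c} (\<lambda>u. (g u + u) / (w - u)^2)"

lemma LS_iff:
  fixes g :: "real \<Rightarrow> real"
  assumes "\<delta> > 0" "s \<in> {-1,1}" "\<forall>x\<in>{c-\<delta>..c}. g x = g c + s * (x - c)"
  shows "LS g c \<longleftrightarrow> s = 1"
proof
  assume "LS g c"
  then obtain \<delta>' where d': "\<delta>' > 0" "\<forall>x\<in>{c-\<delta>'..c}. g x = g c + 1 * (x - c)"
    unfolding LS_def by blast
  have "s = 1"
    by (rule slope_unique[OF _ lin_sub[OF assms(3)] lin_sub[OF d'(2)], of "c - min \<delta> \<delta>'" c])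
       (use assms(1) d'(1) in auto)
  then show "s = 1" .
next
  assume "s = 1"
  then have "\<forall>x\<in>{c-\<delta>..c}. g x = g c + 1 * (x - c)" using assms(3) by (simp only:)
  then show "LS g c" unfolding LS_def using assms(1) by blast
qed

lemma aux_div: "(B::real) \<noteq> 0 \<Longrightarrow> X = K + t * (A - B) \<Longrightarrow> X / B = K / B + t * (A / B) - t"
  by (simp add: field_simps)

lemma J_piece:
  fixes g :: "real \<Rightarrow> real"
  assumes cc: "c < c'" "c' < w" and lin: "\<forall>x\<in>{c..c'}. g x = g c + s * (x - c)"
  shows "Jf g w c c' = (1 + s) * (ln (w - c) - ln (w - c'))"
proof -
  define K where "K = g c + c"
  have "c' \<in> {c..c'}" using cc by simp
  with lin have gc': "g c' = g c + s * (c' - c)" by (rule bspec)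
  have "integral {c..c'} (\<lambda>u. (g u + u) / (w - u)^2) = integral {c..c'} (\<lambda>u. (K + (1 + s) * (u - c)) / (w - u)^2)"
  proof (rule integral_cong)
    fix u assume "u \<in> {c..c'}"
    then have "g u = g c + s * (u - c)" using lin by blast
    then show "(g u + u) / (w - u)^2 = (K + (1 + s) * (u - c)) / (w - u)^2"
      by (simp add: K_def algebra_simps)
  qed
  also have "\<dots> = (K * (1 / (w - c')) + (1 + s) * ((w - c) * (1 / (w - c')) + ln (w - c')))
                 - (K * (1 / (w - c)) + (1 + s) * ((w - c) * (1 / (w - c)) + ln (w - c)))"
  proof (rule integral_unique, rule fundamental_theorem_of_calculus)
    show "c \<le> c'" using cc by simp
    fix u assume u: "u \<in> {c..c'}"
    then have wu: "w - u > 0" using cc by auto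
    then have wu0: "w - u \<noteq> 0" "(w - u)^2 \<noteq> 0" by auto
    have d1: "((\<lambda>u. 1 / (w - u)) has_real_derivative (1 / (w - u)^2)) (at u)"
      using wu0 by (auto intro!: derivative_eq_intros simp: power2_eq_square)
    have d2: "((\<lambda>u. ln (w - u)) has_real_derivative (- 1 / (w - u))) (at u)"
      using wu by (auto intro!: derivative_eq_intros)
    have "((\<lambda>u. K * (1 / (w - u)) + (1 + s) * ((w - c) * (1 / (w - u)) + ln (w - u))) has_real_derivative
          (K * (1 / (w - u)^2) + (1 + s) * ((w - c) * (1 / (w - u)^2) + (- 1 / (w - u))))) (at u)"
      by (intro DERIV_add DERIV_cmult d1 d2)
    moreover have "K * (1 / (w - u)^2) + (1 + s) * ((w - c) * (1 / (w - u)^2) + (- 1 / (w - u))) = (K + (1 + s) * (u - c)) / (w - u)^2"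
    proof -
      have "- 1 / (w - u) = - (w - u) / (w - u)^2" using wu0 by (simp add: power2_eq_square field_simps)
      then show ?thesis by (simp add: add_divide_distrib diff_divide_distrib algebra_simps)
    qed
    ultimately have "((\<lambda>u. K * (1 / (w - u)) + (1 + s) * ((w - c) * (1 / (w - u)) + ln (w - u))) has_real_derivative
          ((K + (1 + s) * (u - c)) / (w - u)^2)) (at u)" by simp
    then show "((\<lambda>u. K * (1 / (w - u)) + (1 + s) * ((w - c) * (1 / (w - u)) + ln (w - u))) has_vector_derivative
          ((K + (1 + s) * (u - c)) / (w - u)^2)) (at u within {c..c'})"
      using has_real_derivative_iff_has_vector_derivative has_vector_derivative_at_within by blast
  qed
  finally have I: "integral {c..c'} (\<lambda>u. (g u + u) / (w - u)^2) = (K * (1 / (w - c')) + (1 + s) * ((w - c) * (1 / (w - c')) + ln (w - c')))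
                 - (K * (1 / (w - c)) + (1 + s) * ((w - c) * (1 / (w - c)) + ln (w - c)))" .
  have w1: "w - c > 0" "w - c' > 0" using cc by auto
  have e1: "(g c' + c') / (w - c') = K / (w - c') + (1 + s) * ((w - c) / (w - c')) - (1 + s)"
  proof -
    have "g c' + c' = K + (1 + s) * ((w - c) - (w - c'))" by (simp add: gc' K_def algebra_simps)
    moreover have "w - c' \<noteq> 0" using w1 by simp
    ultimately show ?thesis using aux_div[of "w - c'"] by blast
  qed
  have e2: "(w - c) * (1 / (w - c)) = 1" using w1 by simp
  show ?thesis unfolding Jf_def I e1 e2 by (simp add: K_def algebra_simps)
qed

lemma J_add:
  fixes g :: "real \<Rightarrow> real"
  assumes "a \<le> c" "c \<le> c'" "c' < w" "continuous_on UNIV g"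
  shows "Jf g w a c' = Jf g w a c + Jf g w c c'"
proof -
  have "continuous_on {a..c'} (\<lambda>u. (g u + u) / (w - u)^2)"
    using assms by (intro continuous_intros) (auto intro: continuous_on_subset)
  then have "(\<lambda>u. (g u + u) / (w - u)^2) integrable_on {a..c'}" by (rule integrable_continuous_interval)
  then have "integral {a..c} (\<lambda>u. (g u + u) / (w - u)^2) + integral {c..c'} (\<lambda>u. (g u + u) / (w - u)^2)
     = integral {a..c'} (\<lambda>u. (g u + u) / (w - u)^2)" by (rule Henstock_Kurzweil_Integration.integral_combine[OF assms(1) assms(2)])
  then show ?thesis unfolding Jf_def by simp
qed



lemma vertex:
  fixes g :: "real \<Rightarrow> real"
  assumes pw: "pw g T" and cont: "continuous_on UNIV g" and Ta: "\<forall>t\<in>T. a < t"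
    and left: "\<forall>x\<in>{a-1..a}. g x = g a + (-1) * (x - a)" and acw: "a < c" "c < w"
  shows "
    (\<Sum>y\<in>local_maxima g \<inter> {a<..<c}. ln (w - y)) - (\<Sum>x\<in>local_minima g \<inter> {a<..<c}. ln (w - x))
    + (if LS g c then ln (w - c) else 0) = - Jf g w a c / 2"
proof -
  have finT: "finite T" using pw by (simp add: pw_def)
  have sub: "local_maxima g \<subseteq> T" "local_minima g \<subseteq> T" using ext_subset[OF pw] by auto
  have main: "\<forall>c. card (T \<inter> {a<..<c}) = n \<longrightarrow> a < c \<longrightarrow> c < w \<longrightarrow>
    (\<Sum>y\<in>local_maxima g \<inter> {a<..<c}. ln (w - y)) - (\<Sum>x\<in>local_minima g \<inter> {a<..<c}. ln (w - x))
    + (if LS g c then ln (w - c) else 0) = - Jf g w a c / 2" for n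
  proof (induction n)
    case 0
    show ?case
    proof (intro allI impI)
      fix c assume c0: "card (T \<inter> {a<..<c}) = 0" and ac: "a < c" and cw: "c < w"
      then have e: "T \<inter> {a<..<c} = {}" using finT by simp
      have fr: "{a-1<..<c} \<inter> T = {}" using e Ta by force
      have cm: "c \<in> {a-1..c}" using ac by simp
      obtain s where s: "s \<in> {-1,1}" "\<forall>x\<in>{a-1..c}. g x = g c + s * (x - c)"
      proof -
        have "a - 1 < c" using ac by simp
        from pwD[OF pw this fr cm] show ?thesis using that by blast
      qed
      have "-1 = s"
        by (rule slope_unique[OF _ left lin_sub[OF s(2)]]) (use ac in auto)
      then have sm: "s = -1" by simp
      have nLS: "\<not> LS g c"
      proof -
        have "c - (c - (a - 1)) = a - 1" by simp
        then have "\<forall>x\<in>{c - (c - (a - 1))..c}. g x = g c + s * (x - c)" using s(2) by (simp only:)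
        moreover have "c - (a - 1) > 0" using ac by simp
        ultimately have "LS g c \<longleftrightarrow> s = 1" using LS_iff[of "c - (a-1)" s c g] s(1) by blast
        then show ?thesis using sm by simp
      qed
      have am: "a \<in> {a..c}" using ac by simp
      have "\<forall>x\<in>{a..c}. g x = g a + s * (x - a)"
        by (rule lin_reanchor[OF lin_sub[OF s(2)] am]) auto
      from J_piece[OF ac cw this] have J0: "Jf g w a c = 0" using sm by simp
      have "local_maxima g \<inter> {a<..<c} = {}" "local_minima g \<inter> {a<..<c} = {}" using e sub by auto
      then show "(\<Sum>y\<in>local_maxima g \<inter> {a<..<c}. ln (w - y)) - (\<Sum>x\<in>local_minima g \<inter> {a<..<c}. ln (w - x))
        + (if LS g c then ln (w - c) else 0) = - Jf g w a c / 2" using nLS J0 by simp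
    qed
  next
    case (Suc n)
    show ?case
    proof (intro allI impI)
      fix c assume cn: "card (T \<inter> {a<..<c}) = Suc n" and ac: "a < c" and cw: "c < w"
      have finTc: "finite (T \<inter> {a<..<c})" using finT by simp
      have ne: "T \<inter> {a<..<c} \<noteq> {}" using cn by auto
      define t where "t = Max (T \<inter> {a<..<c})"
      have tin: "t \<in> T \<inter> {a<..<c}" unfolding t_def using finTc ne by (rule Max_in)
      have tmax: "x \<le> t" if "x \<in> T \<inter> {a<..<c}" for x unfolding t_def using finTc that by (rule Max_ge)
      have at: "a < t" "t < c" "t \<in> T" using tin by auto
      have eqset: "T \<inter> {a<..<t} = (T \<inter> {a<..<c}) - {t}" using tmax at by force
      have cardt: "card (T \<inter> {a<..<t}) = n" unfolding eqset using cn tin finTc by simp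
      have IH: "(\<Sum>y\<in>local_maxima g \<inter> {a<..<t}. ln (w - y)) - (\<Sum>x\<in>local_minima g \<inter> {a<..<t}. ln (w - x))
        + (if LS g t then ln (w - t) else 0) = - Jf g w a t / 2"
        using Suc.IH cardt at cw by auto
      have frc: "{t<..<c} \<inter> T = {}" using tmax at by force
      have tm: "t \<in> {t..c}" using at by simp
      obtain s where s: "s \<in> {-1,1}" "\<forall>x\<in>{t..c}. g x = g t + s * (x - t)"
        using pwD[OF pw at(2) frc tm] by blast
      obtain \<delta> s1 s2 where loc: "\<delta>>0" "s1\<in>{-1,1::real}" "s2\<in>{-1,1::real}"
       "(\<forall>x\<in>{t-\<delta>..t}. g x = g t + s1 * (x - t))" "(\<forall>x\<in>{t..t+\<delta>}. g x = g t + s2 * (x - t))"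
        using pw_local[OF pw, of t] by metis
      have "s2 = s"
        by (rule slope_unique[OF _ lin_sub[OF loc(5)] lin_sub[OF s(2)], of t "t + min \<delta> (c - t)"])
           (use loc(1) at in auto)
      then have ext: "(t \<in> local_minima g \<longleftrightarrow> s1 = -1 \<and> s = 1) \<and> (t \<in> local_maxima g \<longleftrightarrow> s1 = 1 \<and> s = -1)"
        using ext_char[OF loc(1) loc(2) loc(3) loc(4) loc(5)] by simp
      have LSt: "LS g t \<longleftrightarrow> s1 = 1" using LS_iff[OF loc(1) loc(2) loc(4)] .
      have cm: "c \<in> {t..c}" using at by simp
      have lc: "\<forall>x\<in>{t..c}. g x = g c + s * (x - c)" by (rule lin_reanchor[OF s(2) cm])
      have LSc: "LS g c \<longleftrightarrow> s = 1"
      proof -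
        have "c - (c - t) = t" by simp
        then have "\<forall>x\<in>{c - (c - t)..c}. g x = g c + s * (x - c)" using lc by (simp only:)
        moreover have "c - t > 0" using at by simp
        ultimately show ?thesis using LS_iff[of "c - t" s c g] s(1) by blast
      qed
      have Jsplit: "Jf g w a c = Jf g w a t + Jf g w t c" using J_add[of a t c w g] at cw cont by simp
      have Jtc: "Jf g w t c = (1 + s) * (ln (w - t) - ln (w - c))" using J_piece[OF at(2) cw s(2)] .
      have setM: "local_maxima g \<inter> {a<..<c} = (local_maxima g \<inter> {a<..<t}) \<union> (local_maxima g \<inter> {t})"
        using sub tmax at by force
      have setm: "local_minima g \<inter> {a<..<c} = (local_minima g \<inter> {a<..<t}) \<union> (local_minima g \<inter> {t})"
        using sub tmax at by force
      have finM: "finite (local_maxima g \<inter> {a<..<t})" "finite (local_minima g \<inter> {a<..<t})"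
        using sub finT by (auto intro: finite_subset)
      have sM: "(\<Sum>y\<in>local_maxima g \<inter> {a<..<c}. ln (w - y)) = (\<Sum>y\<in>local_maxima g \<inter> {a<..<t}. ln (w - y))
          + (if t \<in> local_maxima g then ln (w - t) else 0)"
        unfolding setM by (subst sum.union_disjoint) (use finM in auto)
      have sm: "(\<Sum>y\<in>local_minima g \<inter> {a<..<c}. ln (w - y)) = (\<Sum>y\<in>local_minima g \<inter> {a<..<t}. ln (w - y))
          + (if t \<in> local_minima g then ln (w - t) else 0)"
        unfolding setm by (subst sum.union_disjoint) (use finM in auto)
      show "(\<Sum>y\<in>local_maxima g \<inter> {a<..<c}. ln (w - y)) - (\<Sum>x\<in>local_minima g \<inter> {a<..<c}. ln (w - x))
        + (if LS g c then ln (w - c) else 0) = - Jf g w a c / 2"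
        unfolding sM sm Jsplit Jtc using IH ext LSt LSc loc(2) s(1)
        by (auto simp: algebra_simps)
    qed
  qed
  show ?thesis by (rule main[of "card (T \<inter> {a<..<c})", rule_format, OF refl acw])
qed



lemma lm_shift_iff:
  "x \<in> local_minima (\<lambda>z. f (z - e) + c) \<longleftrightarrow> x - e \<in> local_minima f"
  "x \<in> local_maxima (\<lambda>z. f (z - e) + c) \<longleftrightarrow> x - e \<in> local_maxima f"
proof -
  have 1: "(\<forall>y. \<bar>y - x\<bar> < d \<longrightarrow> f (x - e) + c \<le> f (y - e) + c) \<longleftrightarrow> (\<forall>y. \<bar>y - (x - e)\<bar> < d \<longrightarrow> f (x - e) \<le> f y)" for d
  proof
    assume H: "\<forall>y. \<bar>y - x\<bar> < d \<longrightarrow> f (x - e) + c \<le> f (y - e) + c"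
    show "\<forall>y. \<bar>y - (x - e)\<bar> < d \<longrightarrow> f (x - e) \<le> f y"
    proof (intro allI impI)
      fix y assume "\<bar>y - (x - e)\<bar> < d"
      then have "\<bar>(y + e) - x\<bar> < d" by (simp add: algebra_simps)
      then show "f (x - e) \<le> f y" using H[rule_format, of "y + e"] by simp
    qed
  next
    assume H: "\<forall>y. \<bar>y - (x - e)\<bar> < d \<longrightarrow> f (x - e) \<le> f y"
    show "\<forall>y. \<bar>y - x\<bar> < d \<longrightarrow> f (x - e) + c \<le> f (y - e) + c"
    proof (intro allI impI)
      fix y assume "\<bar>y - x\<bar> < d"
      then have "\<bar>(y - e) - (x - e)\<bar> < d" by (simp add: algebra_simps)
      then show "f (x - e) + c \<le> f (y - e) + c" using H[rule_format, of "y - e"] by simp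
    qed
  qed
  have 2: "(\<forall>y. \<bar>y - x\<bar> < d \<longrightarrow> f (y - e) + c \<le> f (x - e) + c) \<longleftrightarrow> (\<forall>y. \<bar>y - (x - e)\<bar> < d \<longrightarrow> f y \<le> f (x - e))" for d
  proof
    assume H: "\<forall>y. \<bar>y - x\<bar> < d \<longrightarrow> f (y - e) + c \<le> f (x - e) + c"
    show "\<forall>y. \<bar>y - (x - e)\<bar> < d \<longrightarrow> f y \<le> f (x - e)"
    proof (intro allI impI)
      fix y assume "\<bar>y - (x - e)\<bar> < d"
      then have "\<bar>(y + e) - x\<bar> < d" by (simp add: algebra_simps)
      then show "f y \<le> f (x - e)" using H[rule_format, of "y + e"] by simp
    qed
  next
    assume H: "\<forall>y. \<bar>y - (x - e)\<bar> < d \<longrightarrow> f y \<le> f (x - e)"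
    show "\<forall>y. \<bar>y - x\<bar> < d \<longrightarrow> f (y - e) + c \<le> f (x - e) + c"
    proof (intro allI impI)
      fix y assume "\<bar>y - x\<bar> < d"
      then have "\<bar>(y - e) - (x - e)\<bar> < d" by (simp add: algebra_simps)
      then show "f (y - e) + c \<le> f (x - e) + c" using H[rule_format, of "y - e"] by simp
    qed
  qed
  show "x \<in> local_minima (\<lambda>z. f (z - e) + c) \<longleftrightarrow> x - e \<in> local_minima f"
    unfolding local_minima_def mem_Collect_eq using 1 by presburger
  show "x \<in> local_maxima (\<lambda>z. f (z - e) + c) \<longleftrightarrow> x - e \<in> local_maxima f"
    unfolding local_maxima_def mem_Collect_eq using 2 by presburger
qed

lemma image_shift: "(\<lambda>x. x + e) ` M = {x. x - e \<in> (M::real set)}"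
  by (auto simp: image_iff) (metis diff_add_cancel)

lemma lm_shift:
  "local_minima (\<lambda>z. f (z - e) + c) = (\<lambda>x. x + e) ` local_minima f"
  "local_maxima (\<lambda>z. f (z - e) + c) = (\<lambda>x. x + e) ` local_maxima f"
  unfolding image_shift using lm_shift_iff by auto

lemma weight_shift:
  assumes "x \<in> local_minima f"
  shows "zigzag_weight (\<lambda>z. f (z - e) + c) (x + e) = zigzag_weight f x"
proof -
  have inj: "inj_on (\<lambda>x::real. x + e) A" for A by (auto intro: inj_onI)
  have mem: "x + e \<in> local_minima (\<lambda>z. f (z - e) + c)" using assms lm_shift_iff(1)[of "x+e" f e c] by simp
  have d: "local_minima (\<lambda>z. f (z - e) + c) - {x + e} = (\<lambda>x. x + e) ` (local_minima f - {x})"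
    unfolding lm_shift by auto
  have p1: "(\<Prod>y\<in>local_maxima (\<lambda>z. f (z - e) + c). (x + e - y)) = (\<Prod>y\<in>local_maxima f. (x - y))"
    unfolding lm_shift by (subst prod.reindex[OF inj]) simp
  have p2: "(\<Prod>y\<in>local_minima (\<lambda>z. f (z - e) + c) - {x + e}. (x + e - y)) = (\<Prod>y\<in>local_minima f - {x}. (x - y))"
    unfolding d by (subst prod.reindex[OF inj]) simp
  show ?thesis unfolding zigzag_weight_def using mem assms p1 p2 by simp
qed

lemma aux_inv: "(d::real) \<noteq> 0 \<Longrightarrow> - 1 / d = - d / d^2"
  by (simp add: power2_eq_square)

lemma lm_local:
  assumes "r > 0" "\<forall>y. \<bar>y - w\<bar> < r \<longrightarrow> f y = g y"
  shows "w \<in> local_minima f \<longleftrightarrow> w \<in> local_minima g" "w \<in> local_maxima f \<longleftrightarrow> w \<in> local_maxima g"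
proof -
  have fw: "f w = g w" using assms by auto
  have A: "(\<exists>d>0. \<forall>y. \<bar>y - w\<bar> < d \<longrightarrow> R (f w) (f y)) \<longleftrightarrow> (\<exists>d>0. \<forall>y. \<bar>y - w\<bar> < d \<longrightarrow> R (g w) (g y))" for R
  proof
    assume "\<exists>d>0. \<forall>y. \<bar>y - w\<bar> < d \<longrightarrow> R (f w) (f y)"
    then obtain d where d: "d > 0" "\<forall>y. \<bar>y - w\<bar> < d \<longrightarrow> R (f w) (f y)" by blast
    have "\<forall>y. \<bar>y - w\<bar> < min d r \<longrightarrow> R (g w) (g y)"
    proof (intro allI impI)
      fix y assume "\<bar>y - w\<bar> < min d r"
      then show "R (g w) (g y)" using d assms(2) fw by force
    qed
    then show "\<exists>d>0. \<forall>y. \<bar>y - w\<bar> < d \<longrightarrow> R (g w) (g y)" using d assms(1) by (intro exI[of _ "min d r"]) auto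
  next
    assume "\<exists>d>0. \<forall>y. \<bar>y - w\<bar> < d \<longrightarrow> R (g w) (g y)"
    then obtain d where d: "d > 0" "\<forall>y. \<bar>y - w\<bar> < d \<longrightarrow> R (g w) (g y)" by blast
    have "\<forall>y. \<bar>y - w\<bar> < min d r \<longrightarrow> R (f w) (f y)"
    proof (intro allI impI)
      fix y assume "\<bar>y - w\<bar> < min d r"
      then show "R (f w) (f y)" using d assms(2) fw by force
    qed
    then show "\<exists>d>0. \<forall>y. \<bar>y - w\<bar> < d \<longrightarrow> R (f w) (f y)" using d assms(1) by (intro exI[of _ "min d r"]) auto
  qed
  show "w \<in> local_minima f \<longleftrightarrow> w \<in> local_minima g"
    unfolding local_minima_def mem_Collect_eq using A[of "\<lambda>a b. a \<le> b"] by simp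
  show "w \<in> local_maxima f \<longleftrightarrow> w \<in> local_maxima g"
    unfolding local_maxima_def mem_Collect_eq using A[of "\<lambda>a b. b \<le> a"] by simp
qed

lemma lip_cont:
  fixes f :: "real \<Rightarrow> real"
  assumes "\<forall>z1 z2. \<bar>f z1 - f z2\<bar> \<le> \<bar>z1 - z2\<bar>"
  shows "continuous_on UNIV f"
proof -
  have "1-lipschitz_on UNIV f" by (rule lipschitz_onI) (use assms in \<open>auto simp: dist_real_def\<close>)
  then show ?thesis by (rule lipschitz_on_continuous_on)
qed

lemma m_int:
  fixes a zp w \<epsilon> :: real
  assumes "a \<le> zp - \<epsilon>" "\<epsilon> > 0" "zp < w"
  shows "integral {a..zp} (\<lambda>u. max (-\<epsilon>) (u - zp) / (w - u)^2) = \<epsilon> / (w - a) + ln (w - zp) - ln (w - zp + \<epsilon>)"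
proof -
  define s where "s = w - zp"
  have s0: "s > 0" using assms by (simp add: s_def)
  have cont: "continuous_on {a..zp} (\<lambda>u. max (-\<epsilon>) (u - zp) / (w - u)^2)"
    using assms by (intro continuous_intros) auto
  have I1: "integral {a..zp-\<epsilon>} (\<lambda>u. max (-\<epsilon>) (u - zp) / (w - u)^2) = (-\<epsilon>) * (1 / (w - (zp - \<epsilon>))) - (-\<epsilon>) * (1 / (w - a))"
  proof -
    have "integral {a..zp-\<epsilon>} (\<lambda>u. max (-\<epsilon>) (u - zp) / (w - u)^2) = integral {a..zp-\<epsilon>} (\<lambda>u. (-\<epsilon>) * (1 / (w - u)^2))"
      by (rule integral_cong) auto
    also have "\<dots> = (-\<epsilon>) * (1 / (w - (zp - \<epsilon>))) - (-\<epsilon>) * (1 / (w - a))"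
    proof (rule integral_unique, rule fundamental_theorem_of_calculus)
      show "a \<le> zp - \<epsilon>" using assms by simp
      fix u assume u: "u \<in> {a..zp - \<epsilon>}"
      then have wu0: "w - u \<noteq> 0" using assms by auto
      have "((\<lambda>u. 1 / (w - u)) has_real_derivative (1 / (w - u)^2)) (at u)"
        using wu0 by (auto intro!: derivative_eq_intros simp: power2_eq_square)
      then have "((\<lambda>u. (-\<epsilon>) * (1 / (w - u))) has_real_derivative ((-\<epsilon>) * (1 / (w - u)^2))) (at u)"
        by (rule DERIV_cmult)
      then show "((\<lambda>u. (-\<epsilon>) * (1 / (w - u))) has_vector_derivative ((-\<epsilon>) * (1 / (w - u)^2))) (at u within {a..zp-\<epsilon>})"
        using has_real_derivative_iff_has_vector_derivative has_vector_derivative_at_within by blast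
    qed
    finally show ?thesis .
  qed
  have I2: "integral {zp-\<epsilon>..zp} (\<lambda>u. max (-\<epsilon>) (u - zp) / (w - u)^2)
      = (s * (1 / (w - zp)) + ln (w - zp)) - (s * (1 / (w - (zp - \<epsilon>))) + ln (w - (zp - \<epsilon>)))"
  proof -
    have "integral {zp-\<epsilon>..zp} (\<lambda>u. max (-\<epsilon>) (u - zp) / (w - u)^2) = integral {zp-\<epsilon>..zp} (\<lambda>u. s * (1 / (w - u)^2) + (- 1 / (w - u)))"
    proof (rule integral_cong)
      fix u assume u: "u \<in> {zp-\<epsilon>..zp}"
      then have wu0: "w - u \<noteq> 0" using assms by auto
      have "max (-\<epsilon>) (u - zp) = u - zp" using u by auto
      moreover have "(u - zp) / (w - u)^2 = s * (1 / (w - u)^2) + (- 1 / (w - u))"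
      proof -
        have "- 1 / (w - u) = - (w - u) / (w - u)^2" using aux_inv[OF wu0] .
        then show ?thesis by (simp add: s_def add_divide_distrib diff_divide_distrib algebra_simps)
      qed
      ultimately show "max (-\<epsilon>) (u - zp) / (w - u)^2 = s * (1 / (w - u)^2) + (- 1 / (w - u))" by simp
    qed
    also have "\<dots> = (s * (1 / (w - zp)) + ln (w - zp)) - (s * (1 / (w - (zp - \<epsilon>))) + ln (w - (zp - \<epsilon>)))"
    proof (rule integral_unique, rule fundamental_theorem_of_calculus)
      show "zp - \<epsilon> \<le> zp" using assms by simp
      fix u assume u: "u \<in> {zp - \<epsilon>..zp}"
      then have wu: "w - u > 0" using assms by auto
      then have wu0: "w - u \<noteq> 0" by simp
      have d1: "((\<lambda>u. 1 / (w - u)) has_real_derivative (1 / (w - u)^2)) (at u)"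
        using wu0 by (auto intro!: derivative_eq_intros simp: power2_eq_square)
      have d2: "((\<lambda>u. ln (w - u)) has_real_derivative (- 1 / (w - u))) (at u)"
        using wu by (auto intro!: derivative_eq_intros)
      have "((\<lambda>u. s * (1 / (w - u)) + ln (w - u)) has_real_derivative (s * (1 / (w - u)^2) + (- 1 / (w - u)))) (at u)"
        by (intro DERIV_add DERIV_cmult d1 d2)
      then show "((\<lambda>u. s * (1 / (w - u)) + ln (w - u)) has_vector_derivative (s * (1 / (w - u)^2) + (- 1 / (w - u)))) (at u within {zp-\<epsilon>..zp})"
        using has_real_derivative_iff_has_vector_derivative has_vector_derivative_at_within by blast
    qed
    finally show ?thesis .
  qed
  have "integral {a..zp-\<epsilon>} (\<lambda>u. max (-\<epsilon>) (u - zp) / (w - u)^2) + integral {zp-\<epsilon>..zp} (\<lambda>u. max (-\<epsilon>) (u - zp) / (w - u)^2)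
      = integral {a..zp} (\<lambda>u. max (-\<epsilon>) (u - zp) / (w - u)^2)"
    by (rule Henstock_Kurzweil_Integration.integral_combine) (use assms cont integrable_continuous_interval in auto)
  moreover have "w - (zp - \<epsilon>) = s + \<epsilon>" "w - zp = s" by (auto simp: s_def)
  moreover have "s * (1 / s) = 1" using s0 by simp
  moreover have "s * (1 / (s + \<epsilon>)) = 1 - \<epsilon> / (s + \<epsilon>)" using s0 assms(2) by (simp add: field_simps)
  ultimately show ?thesis using I1 I2 by (simp add: algebra_simps)
qed



lemma lnQ:
  fixes g :: "real \<Rightarrow> real"
  assumes pw: "pw g T" and Ta: "\<forall>t\<in>T. a < t" and az: "a < zp" and zw: "zp < w"
    and nm: "zp \<notin> local_minima g"
  shows "(\<Prod>y\<in>local_maxima g \<inter> {..zp}. (w - y)) / (\<Prod>x\<in>local_minima g \<inter> {..zp}. (w - x)) > 0"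
    and "ln ((\<Prod>y\<in>local_maxima g \<inter> {..zp}. (w - y)) / (\<Prod>x\<in>local_minima g \<inter> {..zp}. (w - x)))
       = (\<Sum>y\<in>local_maxima g \<inter> {a<..<zp}. ln (w - y)) - (\<Sum>x\<in>local_minima g \<inter> {a<..<zp}. ln (w - x))
         + (if zp \<in> local_maxima g then ln (w - zp) else 0)"
proof -
  have finT: "finite T" using pw by (simp add: pw_def)
  have sub: "local_maxima g \<subseteq> T" "local_minima g \<subseteq> T" using ext_subset[OF pw] by auto
  have aM: "a < x" if "x \<in> local_maxima g" for x using that sub Ta by blast
  have am: "a < x" if "x \<in> local_minima g" for x using that sub Ta by blast
  have setM: "local_maxima g \<inter> {..zp} = (local_maxima g \<inter> {a<..<zp}) \<union> (local_maxima g \<inter> {zp})"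
  proof (intro set_eqI iffI)
    fix x assume x: "x \<in> local_maxima g \<inter> {..zp}"
    then have "a < x" using aM by blast
    then show "x \<in> (local_maxima g \<inter> {a<..<zp}) \<union> (local_maxima g \<inter> {zp})" using x by auto
  next
    fix x assume "x \<in> (local_maxima g \<inter> {a<..<zp}) \<union> (local_maxima g \<inter> {zp})"
    then show "x \<in> local_maxima g \<inter> {..zp}" by auto
  qed
  have setm: "local_minima g \<inter> {..zp} = local_minima g \<inter> {a<..<zp}"
  proof (intro set_eqI iffI)
    fix x assume x: "x \<in> local_minima g \<inter> {..zp}"
    then have "a < x" "x \<noteq> zp" using am nm by blast+
    then show "x \<in> local_minima g \<inter> {a<..<zp}" using x by auto
  next
    fix x assume "x \<in> local_minima g \<inter> {a<..<zp}"
    then show "x \<in> local_minima g \<inter> {..zp}" by auto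
  qed
  have fin: "finite (local_maxima g \<inter> {..zp})" "finite (local_minima g \<inter> {..zp})"
    "finite (local_maxima g \<inter> {a<..<zp})"
    using sub finT by (auto intro: finite_subset)
  have P1: "(\<Prod>y\<in>local_maxima g \<inter> {..zp}. (w - y)) > 0" using zw by (intro prod_pos) auto
  have P2: "(\<Prod>x\<in>local_minima g \<inter> {..zp}. (w - x)) > 0" using zw by (intro prod_pos) auto
  show "(\<Prod>y\<in>local_maxima g \<inter> {..zp}. (w - y)) / (\<Prod>x\<in>local_minima g \<inter> {..zp}. (w - x)) > 0"
    using P1 P2 by simp
  have l1: "ln (\<Prod>y\<in>local_maxima g \<inter> {..zp}. (w - y)) = (\<Sum>y\<in>local_maxima g \<inter> {..zp}. ln (w - y))"
    using fin zw by (intro ln_prod) auto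
  have l2: "ln (\<Prod>x\<in>local_minima g \<inter> {..zp}. (w - x)) = (\<Sum>x\<in>local_minima g \<inter> {..zp}. ln (w - x))"
    using fin zw by (intro ln_prod) auto
  have s1: "(\<Sum>y\<in>local_maxima g \<inter> {..zp}. ln (w - y)) = (\<Sum>y\<in>local_maxima g \<inter> {a<..<zp}. ln (w - y))
     + (if zp \<in> local_maxima g then ln (w - zp) else 0)"
    unfolding setM by (subst sum.union_disjoint) (use fin in auto)
  show "ln ((\<Prod>y\<in>local_maxima g \<inter> {..zp}. (w - y)) / (\<Prod>x\<in>local_minima g \<inter> {..zp}. (w - x)))
       = (\<Sum>y\<in>local_maxima g \<inter> {a<..<zp}. ln (w - y)) - (\<Sum>x\<in>local_minima g \<inter> {a<..<zp}. ln (w - x))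
         + (if zp \<in> local_maxima g then ln (w - zp) else 0)"
    using P1 P2 by (simp add: ln_div l1 l2 s1 setm[symmetric])
qed

lemma wsplit:
  fixes g :: "real \<Rightarrow> real"
  assumes pw: "pw g T" and wm: "w \<in> local_minima g" and zw: "zp < w"
  shows "zigzag_weight g w = ((\<Prod>y\<in>local_maxima g \<inter> {..zp}. (w - y)) / (\<Prod>x\<in>local_minima g \<inter> {..zp}. (w - x)))
     * ((\<Prod>y\<in>local_maxima g - {..zp}. (w - y)) / (\<Prod>x\<in>(local_minima g - {w}) - {..zp}. (w - x)))"
proof -
  have finT: "finite T" using pw by (simp add: pw_def)
  have sub: "local_maxima g \<subseteq> T" "local_minima g \<subseteq> T" using ext_subset[OF pw] by auto
  have fin: "finite (local_maxima g)" "finite (local_minima g - {w})" using sub finT by (auto intro: finite_subset)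
  have a: "(\<Prod>y\<in>local_maxima g. (w - y)) = (\<Prod>y\<in>local_maxima g \<inter> {..zp}. (w - y)) * (\<Prod>y\<in>local_maxima g - {..zp}. (w - y))"
    by (rule prod.Int_Diff[OF fin(1)])
  have b: "(\<Prod>x\<in>local_minima g - {w}. (w - x)) = (\<Prod>x\<in>(local_minima g - {w}) \<inter> {..zp}. (w - x)) * (\<Prod>x\<in>(local_minima g - {w}) - {..zp}. (w - x))"
    by (rule prod.Int_Diff[OF fin(2)])
  have c: "(local_minima g - {w}) \<inter> {..zp} = local_minima g \<inter> {..zp}" using zw by auto
  show ?thesis unfolding zigzag_weight_def using wm by (simp add: a b c)
qed



lemma zigzag_pw: "zigzag \<Omega> \<Longrightarrow> \<exists>S. pw \<Omega> S"
  unfolding zigzag_def pw_def by blast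

lemma key:
  fixes \<Omega> :: "real \<Rightarrow> real" and \<epsilon> b zp w :: real
  assumes zz: "zigzag \<Omega>" and ep: "\<epsilon> > 0" and bp: "b > 0"
    and zpe: "zp + b = \<Omega> (zp - \<epsilon>) + \<epsilon>"
    and zpm: "\<forall>z. z + b = \<Omega> (z - \<epsilon>) + \<epsilon> \<longrightarrow> z \<le> zp"
    and wz: "zp < w" and wmin: "w \<in> local_minima (\<lambda>z. \<Omega> (z - \<epsilon>) + \<epsilon>)"
    and pos: "zigzag_weight (\<lambda>z. \<Omega> (z - \<epsilon>) + \<epsilon>) w \<ge> 0"
  shows "zigzag_weight (eps_shift \<Omega> \<epsilon> (\<lambda>x. x + b)) w
     \<ge> zigzag_weight (\<lambda>z. \<Omega> (z - \<epsilon>) + \<epsilon>) w * ((w - zp) / (w + \<epsilon> - zp))"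
proof -
  define O1 where "O1 = (\<lambda>z. \<Omega> (z - \<epsilon>) + \<epsilon>)"
  define Ob where "Ob = eps_shift \<Omega> \<epsilon> (\<lambda>x. x + b)"
  have Ob_eq: "Ob z = min (max (O1 z - 2*\<epsilon>) (z + b)) (O1 z)" for z
    by (simp add: Ob_def O1_def eps_shift_def)
  have Ob_fun: "Ob = (\<lambda>z. min (max (O1 z - 2*\<epsilon>) (z + b)) (O1 z))" using Ob_eq by auto
  obtain S where pwO: "pw \<Omega> S" using zigzag_pw[OF zz] by blast
  have lip: "\<forall>z1 z2. \<bar>\<Omega> z1 - \<Omega> z2\<bar> \<le> \<bar>z1 - z2\<bar>" using zz by (simp add: zigzag_def continual_diagram_def)
  obtain R where R: "\<forall>z. \<bar>z\<bar> \<ge> R \<longrightarrow> \<Omega> z = \<bar>z\<bar>" using zz by (auto simp: zigzag_def continual_diagram_def)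
  define T1 where "T1 = (\<lambda>x. x + \<epsilon>) ` S"
  have pw1: "pw O1 T1" unfolding O1_def T1_def using pw_add_const[OF pw_shift[OF pwO, of \<epsilon>], of \<epsilon>] by simp
  have lip1: "\<forall>z1 z2. \<bar>O1 z1 - O1 z2\<bar> \<le> \<bar>z1 - z2\<bar>"
  proof (intro allI)
    fix z1 z2 show "\<bar>O1 z1 - O1 z2\<bar> \<le> \<bar>z1 - z2\<bar>" using lip[rule_format, of "z1 - \<epsilon>" "z2 - \<epsilon>"] by (simp add: O1_def)
  qed
  have cont1: "continuous_on UNIV O1" by (rule lip_cont[OF lip1])
  have contb: "continuous_on UNIV Ob" unfolding Ob_fun by (intro continuous_intros cont1)
  obtain Tb where pwb: "pw Ob Tb"
  proof -
    have p2: "pw (\<lambda>x. O1 x + (- 2 * \<epsilon>)) T1" by (rule pw_add_const[OF pw1])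
    obtain T2 where "pw (\<lambda>x. max (O1 x + (- 2 * \<epsilon>)) (x + b)) T2" using pw_max[OF p2 pw_lin] by blast
    then obtain T3 where "pw (\<lambda>x. min (max (O1 x + (- 2 * \<epsilon>)) (x + b)) (O1 x)) T3" using pw_min[OF _ pw1] by blast
    then have "pw Ob T3" unfolding Ob_fun by simp
    then show ?thesis using that by blast
  qed
  have zpe1: "zp + b = O1 zp" using zpe by (simp add: O1_def)
  have zpm1: "z \<le> zp" if "z + b = O1 z" for z using zpm that by (simp add: O1_def)
  have gt: "u + b > O1 u" if u: "u > zp" for u
  proof (rule ccontr)
    assume "\<not> u + b > O1 u"
    then have le: "u + b \<le> O1 u" by simp
    define U where "U = max u (max R 0 + \<epsilon>) + 1"
    have U1: "U - \<epsilon> \<ge> R" "U - \<epsilon> > 0" "u \<le> U" unfolding U_def by auto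
    then have "\<Omega> (U - \<epsilon>) = U - \<epsilon>" using R by auto
    then have OU: "O1 U = U" by (simp add: O1_def)
    have "continuous_on {u..U} (\<lambda>x. O1 x - (x + b))"
      by (intro continuous_intros continuous_on_subset[OF cont1]) auto
    moreover have "O1 U - (U + b) \<le> 0" "0 \<le> O1 u - (u + b)" using OU bp le by auto
    ultimately obtain x where x: "u \<le> x" "x \<le> U" "O1 x - (x + b) = 0"
      using IVT2'[of "\<lambda>x. O1 x - (x + b)" U 0 u] U1 by auto
    then have "x \<le> zp" using zpm1[of x] by simp
    then show False using x u by simp
  qed
  have eqr: "Ob u = O1 u" if "u \<ge> zp" for u
  proof (cases "u = zp")
    case True
    then show ?thesis using zpe1 ep by (simp add: Ob_eq)
  next
    case False
    then have "u + b > O1 u" using gt that by simp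
    then show ?thesis using ep by (simp add: Ob_eq)
  qed
  obtain \<delta>0 s1 s2 where loc: "\<delta>0>0" "s1\<in>{-1,1::real}" "s2\<in>{-1,1::real}"
     "\<forall>x\<in>{zp-\<delta>0..zp}. O1 x = O1 zp + s1 * (x - zp)" "\<forall>x\<in>{zp..zp+\<delta>0}. O1 x = O1 zp + s2 * (x - zp)"
    using pw_local[OF pw1, of zp] by metis
  have s2m: "s2 = -1"
  proof (rule ccontr)
    assume "s2 \<noteq> -1"
    then have s21: "s2 = 1" using loc(3) by auto
    have m: "zp + \<delta>0 \<in> {zp..zp+\<delta>0}" using loc(1) by simp
    have "O1 (zp+\<delta>0) = O1 zp + s2 * ((zp+\<delta>0) - zp)" using loc(5) m by (rule bspec)
    then have "O1 (zp+\<delta>0) = O1 zp + \<delta>0" using s21 by simp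
    then have "O1 (zp+\<delta>0) = (zp + \<delta>0) + b" using zpe1 by linarith
    then show False using gt[of "zp+\<delta>0"] loc(1) by simp
  qed
  define \<delta> where "\<delta> = min \<delta>0 \<epsilon>"
  have dl: "\<delta> > 0" "\<delta> \<le> \<delta>0" "\<delta> \<le> \<epsilon>" using loc(1) ep by (auto simp: \<delta>_def)
  have Obzp: "Ob zp = O1 zp" using eqr by simp
  have leftb: "\<forall>x\<in>{zp-\<delta>..zp}. Ob x = Ob zp + 1 * (x - zp)"
  proof
    fix x assume x: "x \<in> {zp-\<delta>..zp}"
    then have x0: "x \<in> {zp-\<delta>0..zp}" using dl by auto
    have ox: "O1 x = O1 zp + s1 * (x - zp)" using loc(4) x0 by (rule bspec)
    have xr: "zp - x \<le> \<epsilon>" "x \<le> zp" using x dl by auto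
    have "Ob x = x + b"
    proof (cases "s1 = 1")
      case True
      then have "O1 x = O1 zp + (x - zp)" using ox by simp
      then have ox1: "O1 x = x + b" using zpe1 by linarith
      have "max (O1 x - 2 * \<epsilon>) (x + b) = x + b" using ox1 ep by simp
      then show ?thesis unfolding Ob_eq using ox1 by simp
    next
      case False
      then have "s1 = -1" using loc(2) by auto
      then have "O1 x = O1 zp - (x - zp)" using ox by simp
      then have a1: "O1 x - 2 * \<epsilon> \<le> x + b" and a2: "x + b \<le> O1 x" using zpe1 xr by linarith+
      then show ?thesis unfolding Ob_eq by (simp add: max_def min_def)
    qed
    then have "Ob x = Ob zp + (x - zp)" using Obzp zpe1 by linarith
    then show "Ob x = Ob zp + 1 * (x - zp)" by simp
  qed
  have rightb: "\<forall>x\<in>{zp..zp+\<delta>}. Ob x = Ob zp + (-1) * (x - zp)"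
  proof
    fix x assume x: "x \<in> {zp..zp+\<delta>}"
    then have "x \<in> {zp..zp+\<delta>0}" using dl by auto
    with loc(5) have "O1 x = O1 zp + s2 * (x - zp)" by (rule bspec)
    moreover have "Ob x = O1 x" using eqr x by simp
    ultimately show "Ob x = Ob zp + (-1) * (x - zp)" using Obzp s2m by simp
  qed
  have sub1: "{zp..zp+\<delta>} \<subseteq> {zp..zp+\<delta>0}" "{zp-\<delta>..zp} \<subseteq> {zp-\<delta>0..zp}" using dl by auto
  have right1: "\<forall>x\<in>{zp..zp+\<delta>}. O1 x = O1 zp + (-1) * (x - zp)"
    using lin_sub[OF loc(5) sub1(1)] unfolding s2m .
  have left1: "\<forall>x\<in>{zp-\<delta>..zp}. O1 x = O1 zp + s1 * (x - zp)"
    using lin_sub[OF loc(4) sub1(2)] .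
  have m11: "(1::real) \<in> {-1,1}" "(-1::real) \<in> {-1,1}" by auto
  have extb: "zp \<in> local_maxima Ob" "zp \<notin> local_minima Ob"
    using ext_char[OF dl(1) m11(1) m11(2) leftb rightb] by auto
  have ext1: "zp \<notin> local_minima O1" "zp \<in> local_maxima O1 \<longleftrightarrow> s1 = 1"
    using ext_char[OF dl(1) loc(2) m11(2) left1 right1] by auto
  have LS1: "LS O1 zp \<longleftrightarrow> s1 = 1" using LS_iff[OF dl(1) loc(2) left1] .
  have LSb: "LS Ob zp" using LS_iff[OF dl(1) m11(1) leftb] by simp
  have finT1: "finite T1" using pw1 by (simp add: pw_def)
  have finTb: "finite Tb" using pwb by (simp add: pw_def)
  define A0 where "A0 = {\<epsilon> - \<bar>R\<bar> - 1, - b / 2 - 1, zp - \<epsilon>} \<union> T1 \<union> Tb"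
  have finA0: "finite A0" using finT1 finTb by (simp add: A0_def)
  define a where "a = Min A0 - 1"
  have aA: "a < t" if "t \<in> A0" for t
  proof -
    have "Min A0 \<le> t" using finA0 that by (rule Min_le)
    then show ?thesis by (simp add: a_def)
  qed
  have aT1: "\<forall>t\<in>T1. a < t" using aA by (auto simp: A0_def)
  have aTb: "\<forall>t\<in>Tb. a < t" using aA by (auto simp: A0_def)
  have a1: "a < \<epsilon> - \<bar>R\<bar> - 1" and a2: "a < - b / 2 - 1" and a3: "a < zp - \<epsilon>" using aA by (auto simp: A0_def)
  have farO1: "O1 x = 2 * \<epsilon> - x" if "x \<le> a" for x
  proof -
    have "\<bar>x - \<epsilon>\<bar> = \<epsilon> - x" "\<epsilon> - x \<ge> R" using that a1 by auto
    then have "\<Omega> (x - \<epsilon>) = \<epsilon> - x" using R by auto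
    then show ?thesis by (simp add: O1_def)
  qed
  have farOb: "Ob x = - x" if "x \<le> a" for x
  proof -
    have "x + b \<le> - x" using that a2 by linarith
    then show ?thesis unfolding Ob_eq farO1[OF that] using ep by (simp add: max_def min_def)
  qed
  have leftO1: "\<forall>x\<in>{a-1..a}. O1 x = O1 a + (-1) * (x - a)"
    using farO1 by auto
  have leftOb: "\<forall>x\<in>{a-1..a}. Ob x = Ob a + (-1) * (x - a)"
    using farOb by auto
  have az: "a < zp" using a3 ep by simp
  have Vb: "(\<Sum>y\<in>local_maxima Ob \<inter> {a<..<zp}. ln (w - y)) - (\<Sum>x\<in>local_minima Ob \<inter> {a<..<zp}. ln (w - x))
    + (if LS Ob zp then ln (w - zp) else 0) = - Jf Ob w a zp / 2"
    by (rule vertex[OF pwb contb aTb leftOb az wz])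
  have V1: "(\<Sum>y\<in>local_maxima O1 \<inter> {a<..<zp}. ln (w - y)) - (\<Sum>x\<in>local_minima O1 \<inter> {a<..<zp}. ln (w - x))
    + (if LS O1 zp then ln (w - zp) else 0) = - Jf O1 w a zp / 2"
    by (rule vertex[OF pw1 cont1 aT1 leftO1 az wz])
  define Qb where "Qb = (\<Prod>y\<in>local_maxima Ob \<inter> {..zp}. (w - y)) / (\<Prod>x\<in>local_minima Ob \<inter> {..zp}. (w - x))"
  define Q1 where "Q1 = (\<Prod>y\<in>local_maxima O1 \<inter> {..zp}. (w - y)) / (\<Prod>x\<in>local_minima O1 \<inter> {..zp}. (w - x))"
  have Qb0: "Qb > 0" and lnQb: "ln Qb = - Jf Ob w a zp / 2"
    using lnQ[OF pwb aTb az wz extb(2)] Vb LSb extb(1) unfolding Qb_def by auto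
  have eqc: "(zp \<in> local_maxima O1) = LS O1 zp" using ext1(2) LS1 by simp
  have Q10: "Q1 > 0" using lnQ(1)[OF pw1 aT1 az wz ext1(1)] unfolding Q1_def .
  have lnQ1: "ln Q1 = - Jf O1 w a zp / 2"
    using lnQ(2)[OF pw1 aT1 az wz ext1(1)] V1 unfolding Q1_def eqc by simp
  have wa: "w - a > 0" using az wz by simp
  have intb: "(\<lambda>u. (Ob u + u) / (w - u)^2) integrable_on {a..zp}"
    using wz by (intro integrable_continuous_interval continuous_intros continuous_on_subset[OF contb]) auto
  have int1: "(\<lambda>u. (O1 u + u) / (w - u)^2) integrable_on {a..zp}"
    using wz by (intro integrable_continuous_interval continuous_intros continuous_on_subset[OF cont1]) auto
  have intm: "(\<lambda>u. 2 * (max (-\<epsilon>) (u - zp) / (w - u)^2)) integrable_on {a..zp}"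
    using wz by (intro integrable_continuous_interval continuous_intros) auto
  have Jdiff: "Jf Ob w a zp - Jf O1 w a zp = 2 * \<epsilon> / (w - a)
      - (integral {a..zp} (\<lambda>u. (Ob u + u) / (w - u)^2) - integral {a..zp} (\<lambda>u. (O1 u + u) / (w - u)^2))"
    unfolding Jf_def using Obzp farOb[of a] farO1[of a] by (simp add: diff_divide_distrib)
  have pt: "2 * (max (-\<epsilon>) (u - zp) / (w - u)^2) \<le> (Ob u + u) / (w - u)^2 - (O1 u + u) / (w - u)^2"
    if u: "u \<in> {a..zp}" for u
  proof -
    have h1: "Ob u \<ge> O1 u - 2 * \<epsilon>" unfolding Ob_eq using ep by simp
    have l: "\<bar>O1 u - O1 zp\<bar> \<le> \<bar>u - zp\<bar>" using lip1 by blast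
    have h3: "O1 u \<le> O1 zp + (zp - u)" "O1 u \<ge> O1 zp - (zp - u)" using l u by auto
    have "u + b = O1 zp - (zp - u)" using zpe1 by linarith
    then have h2: "Ob u \<ge> O1 zp - (zp - u)" unfolding Ob_eq using h3 by simp
    have "2 * max (-\<epsilon>) (u - zp) \<le> Ob u - O1 u"
    proof (cases "-\<epsilon> \<le> u - zp")
      case True
      then have "max (-\<epsilon>) (u - zp) = u - zp" by (simp add: max_def)
      then show ?thesis using h2 h3 by (smt (verit))
    next
      case False
      then have "max (-\<epsilon>) (u - zp) = -\<epsilon>" by (simp add: max_def)
      then show ?thesis using h1 by (smt (verit))
    qed
    then have "2 * max (-\<epsilon>) (u - zp) / (w - u)^2 \<le> (Ob u - O1 u) / (w - u)^2"
      by (rule divide_right_mono) simp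
    moreover have "(Ob u + u) / (w - u)^2 - (O1 u + u) / (w - u)^2 = ((Ob u + u) - (O1 u + u)) / (w - u)^2"
      by (rule diff_divide_distrib[symmetric])
    moreover have "(Ob u + u) - (O1 u + u) = Ob u - O1 u" by simp
    ultimately show ?thesis by simp
  qed
  have "integral {a..zp} (\<lambda>u. 2 * (max (-\<epsilon>) (u - zp) / (w - u)^2))
     \<le> integral {a..zp} (\<lambda>u. (Ob u + u) / (w - u)^2 - (O1 u + u) / (w - u)^2)"
    by (rule integral_le[OF intm Henstock_Kurzweil_Integration.integrable_diff[OF intb int1] pt])
  also have "\<dots> = integral {a..zp} (\<lambda>u. (Ob u + u) / (w - u)^2) - integral {a..zp} (\<lambda>u. (O1 u + u) / (w - u)^2)"
    by (rule Henstock_Kurzweil_Integration.integral_diff[OF intb int1])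
  finally have Ile0: "integral {a..zp} (\<lambda>u. 2 * (max (-\<epsilon>) (u - zp) / (w - u)^2))
     \<le> integral {a..zp} (\<lambda>u. (Ob u + u) / (w - u)^2) - integral {a..zp} (\<lambda>u. (O1 u + u) / (w - u)^2)" .
  have "integral {a..zp} (\<lambda>u. 2 * (max (-\<epsilon>) (u - zp) / (w - u)^2)) = 2 * integral {a..zp} (\<lambda>u. max (-\<epsilon>) (u - zp) / (w - u)^2)"
    by (rule Henstock_Kurzweil_Integration.integral_mult_right)
  also have "\<dots> = 2 * (\<epsilon> / (w - a) + ln (w - zp) - ln (w - zp + \<epsilon>))"
    using m_int[of a zp \<epsilon> w] a3 ep wz by simp
  finally have Ile: "2 * (\<epsilon> / (w - a) + ln (w - zp) - ln (w - zp + \<epsilon>))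
     \<le> integral {a..zp} (\<lambda>u. (Ob u + u) / (w - u)^2) - integral {a..zp} (\<lambda>u. (O1 u + u) / (w - u)^2)"
    using Ile0 by simp
  have Jle: "Jf Ob w a zp - Jf O1 w a zp \<le> 2 * (ln (w - zp + \<epsilon>) - ln (w - zp))"
    using Jdiff Ile by (simp add: algebra_simps)
  have lnle: "ln Q1 + (ln (w - zp) - ln (w - zp + \<epsilon>)) \<le> ln Qb"
    using lnQb lnQ1 Jle by simp
  have pz: "w - zp > 0" "w - zp + \<epsilon> > 0" using wz ep by auto
  have "ln (Q1 * ((w - zp) / (w - zp + \<epsilon>))) = ln Q1 + (ln (w - zp) - ln (w - zp + \<epsilon>))"
    using Q10 pz by (simp add: ln_mult ln_div)
  then have "ln (Q1 * ((w - zp) / (w - zp + \<epsilon>))) \<le> ln Qb" using lnle by simp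
  then have Qle: "Q1 * ((w - zp) / (w - zp + \<epsilon>)) \<le> Qb" using Q10 Qb0 pz by simp
  have wmin1: "w \<in> local_minima O1" using wmin by (simp add: O1_def)
  have loceq: "\<forall>v. \<bar>v - y\<bar> < y - zp \<longrightarrow> Ob v = O1 v" if "y > zp" for y
    using eqr by auto
  have wminb: "w \<in> local_minima Ob" using lm_local(1)[of "w - zp" w Ob O1] loceq[OF wz] wz wmin1 by simp
  have setM: "local_maxima Ob - {..zp} = local_maxima O1 - {..zp}"
  proof (intro set_eqI)
    fix y show "y \<in> local_maxima Ob - {..zp} \<longleftrightarrow> y \<in> local_maxima O1 - {..zp}"
    proof (cases "y > zp")
      case True
      then show ?thesis using lm_local(2)[of "y - zp" y Ob O1] loceq[OF True] by auto
    qed auto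
  qed
  have setm: "local_minima Ob - {w} - {..zp} = local_minima O1 - {w} - {..zp}"
  proof (intro set_eqI)
    fix y show "y \<in> local_minima Ob - {w} - {..zp} \<longleftrightarrow> y \<in> local_minima O1 - {w} - {..zp}"
    proof (cases "y > zp")
      case True
      then show ?thesis using lm_local(1)[of "y - zp" y Ob O1] loceq[OF True] by auto
    qed auto
  qed
  define RR where "RR = (\<Prod>y\<in>local_maxima O1 - {..zp}. (w - y)) / (\<Prod>x\<in>(local_minima O1 - {w}) - {..zp}. (w - x))"
  have zb: "zigzag_weight Ob w = Qb * RR"
    using wsplit[OF pwb wminb wz] unfolding Qb_def RR_def setM setm .
  have z1: "zigzag_weight O1 w = Q1 * RR"
    using wsplit[OF pw1 wmin1 wz] unfolding Q1_def RR_def .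
  have "Q1 * RR \<ge> 0" using pos z1 by (simp add: O1_def)
  then have RR0: "RR \<ge> 0" using Q10 by (simp add: zero_le_mult_iff)
  have "zigzag_weight O1 w * ((w - zp) / (w + \<epsilon> - zp)) = (Q1 * ((w - zp) / (w - zp + \<epsilon>))) * RR"
    unfolding z1 by (simp add: algebra_simps)
  also have "\<dots> \<le> Qb * RR" using Qle RR0 by (rule mult_right_mono)
  finally show ?thesis using zb by (simp add: O1_def Ob_def)
qed



theorem proposition5p1:
  fixes \<Omega> :: "real \<Rightarrow> real" and \<epsilon> b zp :: real and \<phi> :: "real \<Rightarrow> real"
  assumes "zigzag \<Omega>"
    and "\<epsilon> > 0"
    and "b > 0"
    and "zp + b = \<Omega> (zp - \<epsilon>) + \<epsilon>"
    and "\<forall>z. z + b = \<Omega> (z - \<epsilon>) + \<epsilon> \<longrightarrow> z \<le> zp"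
    and "\<forall>z. \<phi> z \<ge> 0"
  shows "(\<integral>\<^sup>+ z. ennreal (\<phi> z) \<partial>transition_measure (eps_shift \<Omega> \<epsilon> (\<lambda>x. x + b)))
         \<ge> (\<integral>\<^sup>+ z. ennreal (\<phi> (z + \<epsilon>) * P_min \<epsilon> zp (z + \<epsilon>)) \<partial>transition_measure \<Omega>)"
proof -
  define O1 where "O1 = (\<lambda>z. \<Omega> (z - \<epsilon>) + \<epsilon>)"
  define Ob where "Ob = eps_shift \<Omega> \<epsilon> (\<lambda>x. x + b)"
  define H where "H y = ennreal (zigzag_weight \<Omega> (y - \<epsilon>)) * ennreal (\<phi> y * P_min \<epsilon> zp y)" for y
  have L: "(\<integral>\<^sup>+ z. ennreal (\<phi> z) \<partial>transition_measure Ob)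
      = (\<integral>\<^sup>+ z. ennreal (zigzag_weight Ob z) * ennreal (\<phi> z) \<partial>count_space UNIV)"
    unfolding transition_measure_def by (subst nn_integral_density) auto
  have "(\<integral>\<^sup>+ z. ennreal (\<phi> (z + \<epsilon>) * P_min \<epsilon> zp (z + \<epsilon>)) \<partial>transition_measure \<Omega>)
      = (\<integral>\<^sup>+ z. ennreal (zigzag_weight \<Omega> z) * ennreal (\<phi> (z + \<epsilon>) * P_min \<epsilon> zp (z + \<epsilon>)) \<partial>count_space UNIV)"
    unfolding transition_measure_def by (subst nn_integral_density) auto
  also have "\<dots> = (\<integral>\<^sup>+ z. H (z + \<epsilon>) \<partial>count_space UNIV)" by (simp add: H_def)
  also have "\<dots> = (\<integral>\<^sup>+ y. H y \<partial>count_space UNIV)"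
  proof (rule nn_integral_bij_count_space)
    show "bij_betw (\<lambda>z. z + \<epsilon>) UNIV UNIV"
      by (rule bij_betwI[of _ _ _ "\<lambda>z. z - \<epsilon>"]) auto
  qed
  also have "\<dots> \<le> (\<integral>\<^sup>+ z. ennreal (zigzag_weight Ob z) * ennreal (\<phi> z) \<partial>count_space UNIV)"
  proof (rule nn_integral_mono)
    fix y :: real
    show "H y \<le> ennreal (zigzag_weight Ob y) * ennreal (\<phi> y)"
    proof (cases "y > zp")
      case False
      then have "P_min \<epsilon> zp y = 0" by (auto simp: P_min_def)
      then show ?thesis by (simp add: H_def)
    next
      case True
      show ?thesis
      proof (cases "y - \<epsilon> \<in> local_minima \<Omega>")
        case False
        then show ?thesis by (simp add: H_def zigzag_weight_def)
      next
        case ymin: True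
        have wmin: "y \<in> local_minima (\<lambda>z. \<Omega> (z - \<epsilon>) + \<epsilon>)" using ymin lm_shift_iff(1)[of y \<Omega> \<epsilon> \<epsilon>] by simp
        have ws: "zigzag_weight (\<lambda>z. \<Omega> (z - \<epsilon>) + \<epsilon>) y = zigzag_weight \<Omega> (y - \<epsilon>)"
          using weight_shift[OF ymin, of \<epsilon> \<epsilon>] by simp
        show ?thesis
        proof (cases "zigzag_weight \<Omega> (y - \<epsilon>) \<ge> 0")
          case False
          then show ?thesis by (simp add: H_def ennreal_neg)
        next
          case p0: True
          have Py: "P_min \<epsilon> zp y = (y - zp) / (y + \<epsilon> - zp)" using True by (simp add: P_min_def)
          have P0: "P_min \<epsilon> zp y \<ge> 0" using True assms(2) by (simp add: Py)
          have k: "zigzag_weight Ob y \<ge> zigzag_weight \<Omega> (y - \<epsilon>) * P_min \<epsilon> zp y"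
            using key[OF assms(1) assms(2) assms(3) assms(4) assms(5) True wmin] p0 ws Py
            unfolding Ob_def by simp
          have phi: "\<phi> y \<ge> 0" using assms(6) by simp
          have kb: "zigzag_weight Ob y \<ge> 0" using k p0 P0 by (meson mult_nonneg_nonneg order_trans)
          have "H y = ennreal (zigzag_weight \<Omega> (y - \<epsilon>) * (\<phi> y * P_min \<epsilon> zp y))"
            unfolding H_def using p0 by (simp add: ennreal_mult')
          also have "\<dots> \<le> ennreal (zigzag_weight Ob y * \<phi> y)"
          proof (rule ennreal_leI)
            have "zigzag_weight \<Omega> (y - \<epsilon>) * (\<phi> y * P_min \<epsilon> zp y) = (zigzag_weight \<Omega> (y - \<epsilon>) * P_min \<epsilon> zp y) * \<phi> y"
              by (simp add: algebra_simps)
            also have "\<dots> \<le> zigzag_weight Ob y * \<phi> y" using k phi by (rule mult_right_mono)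
            finally show "zigzag_weight \<Omega> (y - \<epsilon>) * (\<phi> y * P_min \<epsilon> zp y) \<le> zigzag_weight Ob y * \<phi> y" .
          qed
          also have "\<dots> = ennreal (zigzag_weight Ob y) * ennreal (\<phi> y)" using kb by (simp add: ennreal_mult')
          finally show ?thesis .
        qed
      qed
    qed
  qed
  finally show ?thesis unfolding L[unfolded Ob_def] Ob_def .
qed


end
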